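(* Let $J\subset\mathbb Z$ be a finite interval with $|J|<p$, $J'\subseteq J$ a subinterval and $n\ge1$. Then $\tilde\xi_n^{J'\subset J}$ equals $\ell_n^{J'}$ up to a unit of $\mathbb Z_p[[x]]$.
   Context: Let $p$ be an odd prime and $u\in1+p\mathbb Z_p$, $u\neq1$. For $f\in\mathbb Q_p[[x]]$ and $j\in\mathbb Z$, $f^{(j)}(x)=f(u^{-j}(1+x)-1)$. Let $\omega_n=(1+x)^{p^n}-1$ ($n\ge0$), $\xi_n=\omega_n/\omega_{n-1}$ ($n\ge1$). For a finite set $S\subset\mathbb Z$ of cardinality $|S|$, $\ell_n^{S}=\prod_{j\in S}\xi_n^{(j)}/p$ (empty product $1$). For a finite interval $J$, a subinterval $J'\subseteq J$ and $n\ge1$, $\tilde\xi_n^{J'\subset J}$ denotes the unique polynomial of $\mathbb Q_p[x]$ of degree $<((p-1)|J'|+|J|)p^{n-1}$ with $\tilde\xi_n^{J'\subset J}\equiv\xi_n^{(j)}/p\pmod{\omega_n^{(j)}}$ for $j\in J'$ and $\tilde\xi_n^{J'\subset J}\equiv1\pmod{\omega_{n-1}^{(j)}}$ for $j\in J\setminus J'$. *)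

theory Defs
  imports "HOL-Computational_Algebra.Computational_Algebra"
begin

text \<open>The field Q_p is modelled abstractly as a field of characteristic 0 together with an
absolute value that extends the p-adic absolute value on the integers, in which Q is dense
and which is complete: i.e. a completion of Q with respect to the p-adic absolute value.
Any such field is (isometrically) isomorphic to Q_p.\<close>

definition is_Qp :: "nat \<Rightarrow> ('a::field_char_0 \<Rightarrow> real) \<Rightarrow> bool" where
  "is_Qp p av \<longleftrightarrow>
     (\<forall>x. av x \<ge> 0) \<and> (\<forall>x. av x = 0 \<longleftrightarrow> x = 0) \<and>
     (\<forall>x y. av (x * y) = av x * av y) \<and>
     (\<forall>x y. av (x + y) \<le> max (av x) (av y)) \<and>
     (\<forall>k::int. k \<noteq> 0 \<longrightarrow> av (of_int k) = inverse (real p ^ multiplicity (int p) k)) \<and>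
     (\<forall>x e. e > 0 \<longrightarrow> (\<exists>q::rat. av (x - of_rat q) < e)) \<and>
     (\<forall>X::nat \<Rightarrow> 'a. (\<forall>e>0. \<exists>N. \<forall>m\<ge>N. \<forall>n\<ge>N. av (X m - X n) < e) \<longrightarrow>
        (\<exists>L. \<forall>e>0. \<exists>N. \<forall>n\<ge>N. av (X n - L) < e))"

text \<open>Z_p = closed unit ball; Z_p[[x]] = power series with all coefficients in Z_p.\<close>
definition Zp_fps :: "('a::field_char_0 \<Rightarrow> real) \<Rightarrow> 'a fps \<Rightarrow> bool" where
  "Zp_fps av f \<longleftrightarrow> (\<forall>i. av (fps_nth f i) \<le> 1)"

definition omega :: "nat \<Rightarrow> nat \<Rightarrow> 'a::field_char_0 poly" where
  "omega p n = [:1, 1:] ^ (p ^ n) - 1"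

definition xi :: "nat \<Rightarrow> nat \<Rightarrow> 'a::field_char_0 poly" where
  "xi p n = omega p n div omega p (n - 1)"

definition twist :: "'a::field_char_0 \<Rightarrow> int \<Rightarrow> 'a poly \<Rightarrow> 'a poly" where
  "twist u j f = pcompose f [: u powi (- j) - 1, u powi (- j) :]"

definition ell :: "nat \<Rightarrow> 'a::field_char_0 \<Rightarrow> nat \<Rightarrow> int set \<Rightarrow> 'a poly" where
  "ell p u n S = (\<Prod>j\<in>S. smult (inverse (of_nat p)) (twist u j (xi p n)))"

text \<open>tilde xi_n^{J' subset J}: the unique polynomial of degree
  < ((p-1)|J'| + |J|) p^(n-1) (the zero polynomial having degree -infinity) with the
  prescribed congruences.\<close>
definition xi_tilde :: "nat \<Rightarrow> 'a::field_char_0 \<Rightarrow> nat \<Rightarrow> int set \<Rightarrow> int set \<Rightarrow> 'a poly" where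
  "xi_tilde p u n J' J = (THE q.
     (q = 0 \<or> degree q < ((p - 1) * card J' + card J) * p ^ (n - 1)) \<and>
     (\<forall>j\<in>J'. q mod twist u j (omega p n)
               = smult (inverse (of_nat p)) (twist u j (xi p n)) mod twist u j (omega p n)) \<and>
     (\<forall>j\<in>J - J'. q mod twist u j (omega p (n - 1)) = 1 mod twist u j (omega p (n - 1))))"

end

theory Submission
  imports Defs
begin

locale qp =
  fixes p :: nat and av :: "'a::field_char_0 \<Rightarrow> real"
  assumes prime_p: "prime p" and odd_p: "odd p" and Qp: "is_Qp p av"
begin

lemma av_nonneg: "av x \<ge> 0" using Qp unfolding is_Qp_def by blast
lemma av_eq_0_iff[simp]: "av x = 0 \<longleftrightarrow> x = 0" using Qp unfolding is_Qp_def by blast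
lemma av_0[simp]: "av 0 = 0" using av_eq_0_iff by blast
lemma av_mult: "av (x * y) = av x * av y" using Qp unfolding is_Qp_def by blast
lemma av_ultra: "av (x + y) \<le> max (av x) (av y)" using Qp unfolding is_Qp_def by blast
lemma av_int: "k \<noteq> 0 \<Longrightarrow> av (of_int k) = inverse (real p ^ multiplicity (int p) k)"
  using Qp unfolding is_Qp_def by blast

lemma p_gt1: "p > 1" using prime_p prime_gt_1_nat by blast
lemma p_ge3: "p \<ge> 3" using p_gt1 odd_p by (cases "p = 2") auto

lemma av_1[simp]: "av 1 = 1"
proof -
  have "av 1 = av 1 * av 1" using av_mult[of 1 1] by simp
  moreover have "av 1 \<noteq> 0" by simp
  ultimately show ?thesis by (metis mult_cancel_right1)
qed

lemma av_minus1: "av (-1) = 1"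
proof -
  have "av (-1) * av (-1) = 1" using av_mult[of "-1" "-1"] by simp
  moreover have "av (-1) \<ge> 0" by (rule av_nonneg)
  ultimately show ?thesis
    by (metis abs_of_nonneg abs_square_eq_1 power2_eq_square)
qed

lemma av_minus[simp]: "av (- x) = av x"
  using av_mult[of "-1" x] av_minus1 by simp

lemma av_diff_comm: "av (x - y) = av (y - x)"
  by (metis av_minus minus_diff_eq)

lemma av_inverse: "av (inverse x) = inverse (av x)"
proof (cases "x = 0")
  case False
  then have "av x * av (inverse x) = 1" using av_mult[of x "inverse x"] by simp
  then show ?thesis by (metis inverse_unique)
qed simp

lemma av_divide: "av (x / y) = av x / av y"
  by (simp add: divide_inverse av_mult av_inverse)

lemma av_power: "av (x ^ k) = av x ^ k"
  by (induction k) (simp_all add: av_mult)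

lemma av_add_le: "av x \<le> B \<Longrightarrow> av y \<le> B \<Longrightarrow> av (x + y) \<le> B"
  using av_ultra[of x y] by linarith

lemma av_add_less: "av x < B \<Longrightarrow> av y < B \<Longrightarrow> av (x + y) < B"
  using av_ultra[of x y] by linarith

lemma av_diff_le: "av x \<le> B \<Longrightarrow> av y \<le> B \<Longrightarrow> av (x - y) \<le> B"
  using av_add_le[of x B "-y"] by simp

lemma av_diff_less: "av x < B \<Longrightarrow> av y < B \<Longrightarrow> av (x - y) < B"
  using av_add_less[of x B "-y"] by simp

lemma av_sum_le: "(\<And>i. i \<in> A \<Longrightarrow> av (f i) \<le> B) \<Longrightarrow> B \<ge> 0 \<Longrightarrow> av (sum f A) \<le> B"
proof (induction A rule: infinite_finite_induct)
  case (insert x F) then show ?case by (simp add: av_add_le)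
qed simp_all

lemma av_sum_less: "(\<And>i. i \<in> A \<Longrightarrow> av (f i) < B) \<Longrightarrow> B > 0 \<Longrightarrow> av (sum f A) < B"
proof (induction A rule: infinite_finite_induct)
  case (insert x F) then show ?case by (simp add: av_add_less)
qed simp_all

lemma av_prod: "av (prod f A) = (\<Prod>i\<in>A. av (f i))"
  by (induction A rule: infinite_finite_induct) (simp_all add: av_mult)

lemma av_add_dom: "av y < av x \<Longrightarrow> av (x + y) = av x"
proof -
  assume a: "av y < av x"
  have "av (x + y) \<le> av x" using av_ultra[of x y] a by linarith
  moreover have "av x \<le> max (av (x + y)) (av (- y))" using av_ultra[of "x + y" "-y"] by simp
  ultimately show ?thesis using a by auto
qed

lemma av_near1: "av (x - 1) < 1 \<Longrightarrow> av x = 1"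
  using av_add_dom[of "x - 1" 1] by simp

lemma av_of_int_le: "av (of_int k) \<le> 1"
proof (cases "k = 0")
  case False
  have "1 \<le> real p ^ multiplicity (int p) k" using p_gt1 by simp
  then show ?thesis using av_int[OF False] p_gt1
    by (simp add: inverse_le_1_iff)
qed simp

lemma av_of_nat_le: "av (of_nat k) \<le> 1"
  using av_of_int_le[of "int k"] by simp

lemma av_of_nat_unit: "\<not> p dvd k \<Longrightarrow> av (of_nat k) = 1"
proof -
  assume a: "\<not> p dvd k"
  then have "k \<noteq> 0" by (metis dvd_0_right)
  then have "av (of_int (int k)) = inverse (real p ^ multiplicity (int p) (int k))"
    by (intro av_int) (use \<open>k \<noteq> 0\<close> in simp)
  moreover have "multiplicity (int p) (int k) = 0"
    by (rule not_dvd_imp_multiplicity_0) (use a in auto)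
  ultimately show ?thesis by simp
qed

lemma av_of_nat_dvd: "p dvd k \<Longrightarrow> av (of_nat k) \<le> inverse (real p)"
proof (cases "k = 0")
  case False
  assume d: "p dvd k"
  have "av (of_int (int k)) = inverse (real p ^ multiplicity (int p) (int k))"
    by (intro av_int) (use False in simp)
  moreover have "1 \<le> multiplicity (int p) (int k)"
    by (rule multiplicity_geI) (use False d prime_p in \<open>auto simp: prime_gt_1_nat\<close>)
  ultimately have e: "av (of_nat k) = inverse (real p ^ multiplicity (int p) (int k))" by simp
  have "real p ^ 1 \<le> real p ^ multiplicity (int p) (int k)"
    by (rule power_increasing) (use \<open>1 \<le> _\<close> p_gt1 in auto)
  then show ?thesis unfolding e using p_gt1 by (intro le_imp_inverse_le) auto
qed (simp add: p_gt1)

lemma av_p: "av (of_nat p :: 'a) = inverse (real p)"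
proof -
  have "av (of_int (int p) :: 'a) = inverse (real p ^ multiplicity (int p) (int p))"
    by (intro av_int) (use p_gt1 in simp)
  moreover have "multiplicity (int p) (int p) = 1"
    by (rule multiplicity_self) (use p_gt1 in auto)
  ultimately show ?thesis by simp
qed

lemma p_nz[simp]: "(of_nat p :: 'a) \<noteq> 0" using p_gt1 by simp

end

context qp begin

definition intp :: "'a poly \<Rightarrow> bool" where
  "intp f \<longleftrightarrow> (\<forall>k. av (coeff f k) \<le> 1)"

lemma intpI: "(\<And>k. av (coeff f k) \<le> 1) \<Longrightarrow> intp f" by (simp add: intp_def)
lemma intpD: "intp f \<Longrightarrow> av (coeff f k) \<le> 1" by (simp add: intp_def)

lemma intp_0[simp]: "intp 0" by (simp add: intp_def)
lemma intp_const: "av c \<le> 1 \<Longrightarrow> intp [:c:]"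
  by (simp add: intp_def coeff_pCons split: nat.split)
lemma intp_1[simp]: "intp 1" by (simp add: one_pCons intp_const)
lemma intp_pCons: "av c \<le> 1 \<Longrightarrow> intp f \<Longrightarrow> intp (pCons c f)"
  by (simp add: intp_def coeff_pCons split: nat.split)
lemma intp_pCons_iff: "intp (pCons c f) \<longleftrightarrow> av c \<le> 1 \<and> intp f"
  by (auto simp: intp_def coeff_pCons split: nat.split)
lemma intp_add: "intp f \<Longrightarrow> intp g \<Longrightarrow> intp (f + g)"
  by (simp add: intp_def av_add_le)
lemma intp_minus: "intp f \<Longrightarrow> intp (- f)"
  by (simp add: intp_def)
lemma intp_diff: "intp f \<Longrightarrow> intp g \<Longrightarrow> intp (f - g)"
  by (simp add: intp_def av_diff_le)
lemma intp_mult: "intp f \<Longrightarrow> intp g \<Longrightarrow> intp (f * g)"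
  unfolding intp_def coeff_mult
  by (intro allI av_sum_le) (auto simp: av_mult intro: mult_le_one av_nonneg)
lemma intp_smult: "av c \<le> 1 \<Longrightarrow> intp f \<Longrightarrow> intp (smult c f)"
  by (simp add: intp_def av_mult mult_le_one av_nonneg)
lemma intp_power: "intp f \<Longrightarrow> intp (f ^ k)"
  by (induction k) (simp_all add: intp_mult)
lemma intp_prod: "(\<And>i. i \<in> A \<Longrightarrow> intp (f i)) \<Longrightarrow> intp (prod f A)"
  by (induction A rule: infinite_finite_induct) (simp_all add: intp_mult)
lemma intp_sum: "(\<And>i. i \<in> A \<Longrightarrow> intp (f i)) \<Longrightarrow> intp (sum f A)"
  by (induction A rule: infinite_finite_induct) (simp_all add: intp_add)
lemma intp_monom: "av c \<le> 1 \<Longrightarrow> intp (monom c k)"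
  by (simp add: intp_def coeff_monom)
lemma intp_X[simp]: "intp [:a, 1:] \<longleftrightarrow> av a \<le> 1"
  by (simp add: intp_pCons_iff intp_const)
lemma intp_pcompose: "intp f \<Longrightarrow> intp g \<Longrightarrow> intp (f \<circ>\<^sub>p g)"
proof -
  assume f: "intp f" and g: "intp g"
  have "coeff (f \<circ>\<^sub>p g) k \<in> {x. av x \<le> 1}" for k
    by (rule coeff_pcompose_semiring_closed)
      (use f g in \<open>auto simp: intp_def av_mult intro: av_add_le mult_le_one av_nonneg\<close>)
  then show ?thesis by (simp add: intp_def)
qed

lemma poly_intp: "intp f \<Longrightarrow> av x \<le> 1 \<Longrightarrow> av (poly f x) \<le> 1"
proof (induction f rule: pCons_induct)
  case (pCons a f)
  then have "intp f" "av a \<le> 1" by (simp_all add: intp_pCons_iff)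
  with pCons show ?case
    by (auto simp: av_mult intro!: av_add_le mult_le_one av_nonneg)
qed simp

lemma poly_near0: "intp f \<Longrightarrow> av x < 1 \<Longrightarrow> av (poly f x - coeff f 0) < 1"
proof -
  assume f: "intp f" and x: "av x < 1"
  obtain a g where fg: "f = pCons a g" by (rule pCons_cases)
  with f have "intp g" by (simp add: intp_pCons_iff)
  then have "av (poly g x) \<le> 1" using x poly_intp by simp
  then have "av x * av (poly g x) < 1"
    using x av_nonneg[of x] av_nonneg[of "poly g x"]
    by (metis le_less_trans mult_left_le mult_less_cancel_right1 verit_comp_simplify1(3) mult_le_cancel_left1 mult_less_cancel_left1)
  then show ?thesis using fg by (simp add: av_mult)
qed

lemma av_le1_of_small: "av x \<le> inverse (real p) \<Longrightarrow> av x < 1"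
proof -
  assume "av x \<le> inverse (real p)"
  moreover have "inverse (real p) < 1" using p_gt1 by (simp add: inverse_less_1_iff)
  ultimately show ?thesis by linarith
qed

end

lemma coeff_X1_power: "coeff ([:1,1:]^k :: 'a::comm_ring_1 poly) i = of_nat (k choose i)"
proof (induction k arbitrary: i)
  case 0 then show ?case by (cases i) auto
next
  case (Suc k)
  have e: "[:1,1:]^Suc k = [:1,1:]^k + pCons 0 ([:1,1:]^k :: 'a poly)"
    by (simp add: mult_pCons_left)
  show ?case
  proof (cases i)
    case 0 then show ?thesis unfolding e by (simp add: Suc)
  next
    case (Suc j) then show ?thesis unfolding e using Suc.IH by (simp add: add.commute)
  qed
qed

lemma X_power_monom: "([:0,1:] :: 'a::comm_ring_1 poly)^n = monom 1 n"
  by (induction n) (simp_all add: monom_Suc mult_pCons_left monom_0 one_pCons)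

lemma coeff_X_pow: "coeff ([:0,1:]^n :: 'a::comm_ring_1 poly) i = (if i = n then 1 else 0)"
  by (simp add: X_power_monom coeff_monom)

context qp begin

definition Phi :: "'a poly" where "Phi = (\<Sum>k<p. [:1,1:]^k)"
definition Apol :: "'a poly" where "Apol = smult (inverse (of_nat p)) (Phi - [:0,1:]^(p-1))"

lemma X_Phi: "[:0,1:] * Phi = [:1,1:]^p - 1"
proof -
  have "[:1,1:]^p - 1 = ([:1,1:] - 1) * Phi"
    unfolding Phi_def by (rule power_diff_1_eq)
  moreover have "[:1,1:] - 1 = ([:0,1:] :: 'a poly)" by (simp add: one_pCons)
  ultimately show ?thesis by simp
qed

lemma coeff_Phi: "coeff Phi i = of_nat (p choose Suc i)"
proof -
  have "coeff Phi i = (\<Sum>k<p. of_nat (k choose i))"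
    unfolding Phi_def coeff_sum coeff_X1_power by simp
  also have "\<dots> = of_nat (\<Sum>k\<le>p-1. k choose i)"
    using p_gt1 by (simp add: lessThan_Suc_atMost[symmetric])
  also have "(\<Sum>k\<le>p-1. k choose i) = p choose Suc i"
    using sum_choose_upper[of i "p-1"] p_gt1 by simp
  finally show ?thesis .
qed

lemma Phi_Apol: "Phi = smult (of_nat p) Apol + [:0,1:]^(p-1)"
  unfolding Apol_def using p_gt1 by simp

lemma coeff_Apol: "coeff Apol i = (of_nat (p choose Suc i) - (if i = p - 1 then 1 else 0)) / of_nat p"
  unfolding Apol_def by (simp add: coeff_Phi coeff_X_pow divide_inverse mult.commute)

lemma intp_Apol: "intp Apol"
proof (rule intpI)
  fix i
  consider "Suc i < p" | "i = p - 1" | "Suc i > p" using p_gt1 by linarith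
  then show "av (coeff Apol i) \<le> 1"
  proof cases
    case 1
    then have "i \<noteq> p - 1" by auto
    have "p dvd (p choose Suc i)" by (rule dvd_choose_prime) (use 1 prime_p in auto)
    then have "av (of_nat (p choose Suc i) :: 'a) \<le> inverse (real p)" by (rule av_of_nat_dvd)
    then have "av (of_nat (p choose Suc i) :: 'a) / av (of_nat p :: 'a) \<le> 1"
      using p_gt1 by (simp add: av_p field_simps)
    then show ?thesis using \<open>i \<noteq> p - 1\<close> by (simp add: coeff_Apol av_divide)
  next
    case 2 then show ?thesis using p_gt1 by (simp add: coeff_Apol)
  next
    case 3
    then have "i \<noteq> p - 1" "p choose Suc i = 0" using p_gt1 by (auto simp: binomial_eq_0)
    then have "coeff Apol i = 0" unfolding coeff_Apol by (simp only: if_False of_nat_0) simp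
    then show ?thesis by simp
  qed
qed

lemma coeff_Apol_0: "coeff Apol 0 = 1"
  using p_gt1 by (simp add: coeff_Apol)

lemma degree_Phi: "degree Phi \<le> p - 1"
  unfolding Phi_def
  by (rule degree_sum_le) (auto intro: order.trans[OF degree_power_le] )

lemma poly_Phi_0: "poly Phi 0 = of_nat p"
  by (simp add: poly_0_coeff_0 coeff_Phi)

lemma ip_lt1: "inverse (real p) < 1" using p_gt1 by (simp add: inverse_less_1_iff)
lemma ip_pos: "inverse (real p) > 0" using p_gt1 by simp

lemma av_poly_Phi: "av d \<le> inverse (real p) \<Longrightarrow> av (poly Phi d) = inverse (real p)"
proof -
  assume d: "av d \<le> inverse (real p)"
  have e: "poly Phi d = of_nat p * poly Apol d + d^(p-1)"
    by (subst Phi_Apol) (simp add: poly_monom)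
  have "av (poly Apol d - 1) < 1"
    using poly_near0[OF intp_Apol, of d] d ip_lt1 by (simp add: coeff_Apol_0)
  then have a1: "av (poly Apol d) = 1" by (rule av_near1)
  have a2: "av (of_nat p * poly Apol d) = inverse (real p)" by (simp add: av_mult a1 av_p)
  have "av (d^(p-1)) = av d ^ (p-1)" by (rule av_power)
  also have "\<dots> \<le> inverse (real p) ^ (p-1)" by (rule power_mono[OF d av_nonneg])
  also have "\<dots> \<le> inverse (real p) ^ 2" 
    by (rule power_decreasing) (use p_ge3 ip_lt1 ip_pos in auto)
  also have "\<dots> < inverse (real p)"
    using ip_lt1 ip_pos by (simp add: power2_eq_square)
  finally have "av (d^(p-1)) < av (of_nat p * poly Apol d)" using a2 by simp
  then show ?thesis using av_add_dom e a2 by simp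
qed

end

context qp begin

definition near1 :: "'a \<Rightarrow> bool" where "near1 w \<longleftrightarrow> av (w - 1) \<le> inverse (real p)"

lemma near1_av: "near1 w \<Longrightarrow> av w = 1"
  unfolding near1_def by (intro av_near1 av_le1_of_small)

lemma near1_1[simp]: "near1 1" by (simp add: near1_def ip_pos less_imp_le)

lemma near1_mult: "near1 x \<Longrightarrow> near1 y \<Longrightarrow> near1 (x * y)"
proof -
  assume x: "near1 x" and y: "near1 y"
  have e: "x * y - 1 = x * (y - 1) + (x - 1)" by (simp add: algebra_simps)
  show ?thesis unfolding near1_def e
    by (rule av_add_le) (use x y near1_av[OF x] in \<open>simp_all add: av_mult near1_def\<close>)
qed

lemma near1_inverse: "near1 x \<Longrightarrow> near1 (inverse x)"
proof -
  assume x: "near1 x"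
  then have "x \<noteq> 0" using near1_av by force
  then have e: "inverse x - 1 = inverse x * (1 - x)" by (simp add: field_simps)
  show ?thesis using x near1_av[OF x] unfolding near1_def e
    by (simp add: av_mult av_inverse av_diff_comm)
qed

lemma near1_power: "near1 x \<Longrightarrow> near1 (x ^ k)"
  by (induction k) (simp_all add: near1_mult)

lemma near1_powi: "near1 x \<Longrightarrow> near1 (x powi k)"
proof (cases "k \<ge> 0")
  case True
  assume x: "near1 x"
  obtain n where "k = int n" using True zero_le_imp_eq_int by blast
  then show ?thesis using near1_power[OF x] by (simp add: power_int_of_nat)
next
  case False
  assume x: "near1 x"
  have "- k \<ge> 0" using False by simp
  then obtain n where "- k = int n" using zero_le_imp_eq_int by blast
  then have "k = - int n" by simp
  then show ?thesis using near1_inverse[OF near1_power[OF x]] by (simp add: power_int_minus power_int_of_nat)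
qed

lemma poly_Phi_eq: "poly Phi d = (\<Sum>k<p. (1 + d)^k)"
  unfolding Phi_def by (simp add: poly_sum poly_power)

lemma no_root_nat: "near1 y \<Longrightarrow> y \<noteq> 1 \<Longrightarrow> m > 0 \<Longrightarrow> y ^ m \<noteq> 1"
proof (induction m arbitrary: y rule: less_induct)
  case (less m)
  show ?case
  proof (cases "p dvd m")
    case True
    then obtain m' where m': "m = p * m'" by blast
    then have "m' > 0" "m' < m" using less.prems p_gt1 by auto
    have e: "y^p - 1 = (y - 1) * poly Phi (y - 1)"
      by (simp add: poly_Phi_eq power_diff_1_eq)
    have "av (poly Phi (y - 1)) = inverse (real p)"
      using less.prems by (intro av_poly_Phi) (simp add: near1_def)
    then have "poly Phi (y - 1) \<noteq> 0" using ip_pos by force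
    then have "y^p \<noteq> 1" using e less.prems by auto
    moreover have "near1 (y^p)" using less.prems by (simp add: near1_power)
    ultimately have "(y^p)^m' \<noteq> 1" using less.IH[OF \<open>m' < m\<close>] \<open>m' > 0\<close> by blast
    then show ?thesis by (simp add: m' power_mult)
  next
    case False
    have s: "(\<Sum>k<m. y^k) = of_nat m + (\<Sum>k<m. y^k - 1)"
      by (simp add: sum_subtractf)
    have "av (\<Sum>k<m. y^k - 1) < 1"
      by (rule av_sum_less) (use less.prems near1_power in \<open>auto simp: near1_def intro: av_le1_of_small\<close>)
    then have "av (\<Sum>k<m. y^k) = 1" unfolding s using av_add_dom av_of_nat_unit[OF False] by simp
    then have "(\<Sum>k<m. y^k) \<noteq> 0" by force
    then show ?thesis using less.prems power_diff_1_eq[of y m] by auto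
  qed
qed

lemma no_root_int: "near1 y \<Longrightarrow> y \<noteq> 1 \<Longrightarrow> k \<noteq> 0 \<Longrightarrow> y powi k \<noteq> 1"
proof (cases "k > 0")
  case True
  assume a: "near1 y" "y \<noteq> 1"
  obtain n where "k = int n" "n > 0" using True zero_less_imp_eq_int by blast
  then show ?thesis using no_root_nat[OF a] by (simp add: power_int_of_nat)
next
  case False
  assume a: "near1 y" "y \<noteq> 1" "k \<noteq> 0"
  then have "- k > 0" using False by simp
  then obtain n where "- k = int n" "n > 0" using zero_less_imp_eq_int by blast
  then have "k = - int n" "n > 0" by simp_all
  then show ?thesis using no_root_nat[OF a(1,2)] by (simp add: power_int_minus power_int_of_nat)
qed

end

lemma pcompose_power_left: "(f ^ n) \<circ>\<^sub>p g = (f \<circ>\<^sub>p (g :: 'a::comm_ring_1 poly)) ^ n"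
  by (induction n) (simp_all add: pcompose_mult one_pCons pcompose_const)

lemma pcompose_X_left[simp]: "[:0, 1:] \<circ>\<^sub>p (g :: 'a::comm_ring_1 poly) = g"
  by (simp add: pcompose_pCons)

lemma key_alg: fixes A XW XL R :: "'a::field poly"
  assumes "c \<noteq> 0"
  shows "smult (inverse c) (smult c A + (smult g (XW - smult c XL) + smult d R))
          - (A + smult (d / c) R - smult g XL) = smult (g / c) XW"
  using assms by (simp add: smult_add_right smult_diff_right divide_inverse) (simp add: field_simps)

lemma mult_le1_less1: "0 \<le> a \<Longrightarrow> a \<le> 1 \<Longrightarrow> 0 \<le> b \<Longrightarrow> b < (1::real) \<Longrightarrow> a * b < 1"
proof -
  assume "0 \<le> a" "a \<le> 1" "0 \<le> b" "b < 1"
  then have "a * b \<le> 1 * b" by (intro mult_right_mono) auto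
  then show ?thesis using \<open>b < 1\<close> by simp
qed

context qp begin

lemma W_struct:
  assumes "finite J" "\<And>j. j \<in> J \<Longrightarrow> av (r j) \<le> inverse (real p)"
  shows "\<exists>L. (\<Prod>j\<in>J. [:- r j, 1:]) = monom 1 (card J) + smult (of_nat p) L \<and> intp L
            \<and> (\<forall>k\<ge>card J. coeff L k = 0)"
  using assms
proof (induction J rule: finite_induct)
  case empty
  show ?case by (rule exI[of _ 0]) (simp add: one_pCons monom_0)
next
  case (insert j A)
  then obtain L where L: "(\<Prod>j\<in>A. [:- r j, 1:]) = monom 1 (card A) + smult (of_nat p) L"
    "intp L" "\<forall>k\<ge>card A. coeff L k = 0" by auto
  define L' where "L' = smult (- r j / of_nat p) (monom 1 (card A)) + pCons 0 L - smult (r j) L"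
  have "(\<Prod>j\<in>insert j A. [:- r j, 1:]) = [:- r j, 1:] * (monom 1 (card A) + smult (of_nat p) L)"
    using insert L by simp
  also have "\<dots> = monom 1 (card (insert j A)) + smult (of_nat p) L'"
    unfolding L'_def using insert(1,2) p_gt1
    by (intro poly_eqI) (auto simp: coeff_pCons coeff_monom field_simps mult_pCons_left split: nat.split)
  finally have e: "(\<Prod>j\<in>insert j A. [:- r j, 1:]) = monom 1 (card (insert j A)) + smult (of_nat p) L'" .
  have rj: "av (r j) \<le> inverse (real p)" using insert by simp
  have "av (- r j / of_nat p) \<le> 1" using rj p_gt1 by (simp add: av_divide av_p field_simps)
  moreover have "av (r j) \<le> 1" using rj av_le1_of_small by force
  ultimately have "intp L'" unfolding L'_def using L(2)
    by (intro intp_add intp_diff intp_smult intp_monom intp_pCons) auto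
  moreover have "\<forall>k\<ge>card (insert j A). coeff L' k = 0"
    unfolding L'_def using insert(1,2) L(3) by (auto simp: coeff_pCons coeff_monom split: nat.split)
  ultimately show ?case using e by blast
qed



lemma Hj_exists:
  assumes g: "near1 \<gamma>" and W: "W = monom 1 N + smult (of_nat p) L" "intp L" "N \<ge> 1" "N \<le> p - 1"
    and L0: "N = p - 1 \<Longrightarrow> av (coeff L 0) < 1"
  shows "\<exists>Hj. intp Hj \<and> av (poly Hj 0 - 1) < 1 \<and>
           W dvd smult (inverse (of_nat p)) (Phi \<circ>\<^sub>p [:\<gamma> - 1, \<gamma>:]) - Hj"
proof -
  define m where "m = p - 1"
  define \<delta> where "\<delta> = \<gamma> - 1"
  define t where "t = [:\<delta>, \<gamma>:]"
  define y where "y = smult \<gamma> [:0, 1:]"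
  define R where "R = (\<Sum>i<m. y ^ (m - Suc i) * t ^ i)"
  define X where "X = ([:0, 1:] :: 'a poly)"
  have ag: "av \<gamma> = 1" using near1_av[OF g] .
  have ad: "av \<delta> \<le> inverse (real p)" using g by (simp add: near1_def \<delta>_def)
  have ad1: "av \<delta> < 1" using ad av_le1_of_small by blast
  have mN: "m - N + N = m" using W(4) m_def by simp
  have ty: "t - y = [:\<delta>:]" unfolding t_def y_def by simp
  have tm: "t ^ m = y ^ m + smult \<delta> R"
  proof -
    have "t ^ m - y ^ m = [:\<delta>:] * R" using power_diff_sumr2[of t m y] unfolding ty R_def .
    then have "t ^ m = y ^ m + [:\<delta>:] * R" by (simp add: algebra_simps)
    then show ?thesis by simp
  qed
  have ym: "y ^ m = smult (\<gamma> ^ m) (X ^ (m - N) * W - smult (of_nat p) (X ^ (m - N) * L))"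
  proof -
    have "y ^ m = smult (\<gamma> ^ m) (X ^ m)" unfolding y_def X_def by (rule smult_power)
    also have "X ^ m = X ^ (m - N) * X ^ N" by (simp add: power_add[symmetric] mN)
    also have "X ^ N = W - smult (of_nat p) L" unfolding X_def X_power_monom W(1) by simp
    finally show ?thesis by (simp add: algebra_simps)
  qed
  have phi: "Phi \<circ>\<^sub>p t = smult (of_nat p) (Apol \<circ>\<^sub>p t) + t ^ m"
    unfolding m_def by (subst Phi_Apol) (simp add: pcompose_add pcompose_smult pcompose_power_left)
  define Hj where "Hj = Apol \<circ>\<^sub>p t + smult (\<delta> / of_nat p) R - smult (\<gamma> ^ m) (X ^ (m - N) * L)"
  have key: "smult (inverse (of_nat p)) (Phi \<circ>\<^sub>p t) - Hj = W * smult (\<gamma> ^ m / of_nat p) (X ^ (m - N))"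
    unfolding phi tm ym Hj_def using key_alg[of "of_nat p" "Apol \<circ>\<^sub>p t" "\<gamma> ^ m" "X ^ (m - N) * W"
      "X ^ (m - N) * L" \<delta> R] p_gt1 by (simp add: mult.commute)
  have it: "intp t" unfolding t_def using ag ad1 by (simp add: intp_pCons intp_const)
  have iy: "intp y" unfolding y_def using ag by (simp add: intp_smult intp_pCons intp_const)
  have iR: "intp R" unfolding R_def using it iy by (intro intp_sum intp_mult intp_power)
  have adp: "av (\<delta> / of_nat p) \<le> 1" using ad p_gt1 by (simp add: av_divide av_p field_simps)
  have iX: "intp X" unfolding X_def by (simp add: intp_pCons intp_const)
  have "intp Hj" unfolding Hj_def
    using intp_pcompose[OF intp_Apol it] iR adp ag W(2) iX
    by (intro intp_add intp_diff intp_smult intp_mult intp_power) (auto simp: av_power)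
  moreover have "av (poly Hj 0 - 1) < 1"
  proof -
    have a1: "av (poly (Apol \<circ>\<^sub>p t) 0 - 1) < 1"
      using poly_near0[OF intp_Apol ad1] by (simp add: poly_pcompose t_def coeff_Apol_0)
    have "poly R 0 = (\<Sum>i<m. 0 ^ (m - Suc i) * \<delta> ^ i)"
      unfolding R_def by (simp add: poly_sum y_def t_def)
    moreover have "av (\<Sum>i<m. 0 ^ (m - Suc i) * \<delta> ^ i) < 1"
    proof (rule av_sum_less)
      fix i assume i: "i \<in> {..<m}"
      show "av (0 ^ (m - Suc i) * \<delta> ^ i) < 1"
      proof (cases "m - Suc i = 0")
        case True
        then have "i \<ge> 1" using i m_def p_ge3 by auto
        have "av \<delta> ^ i \<le> av \<delta> ^ 1" by (rule power_decreasing) (use \<open>i \<ge> 1\<close> ad1 av_nonneg in auto)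
        then show ?thesis using True ad1 by (simp add: av_mult av_power)
      qed (simp add: power_0_left)
    qed simp
    ultimately have "av (poly R 0) < 1" by simp
    then have a2: "av (poly (smult (\<delta> / of_nat p) R) 0) < 1"
    proof -
      have "av (\<delta> / of_nat p) * av (poly R 0) < 1"
        using adp \<open>av (poly R 0) < 1\<close> av_nonneg by (intro mult_le1_less1) auto
      then show ?thesis by (simp add: av_mult[symmetric])
    qed
    have a3: "av (poly (smult (\<gamma> ^ m) (X ^ (m - N) * L)) 0) < 1"
    proof (cases "m - N = 0")
      case True
      then have "N = p - 1" using W(4) m_def by simp
      then show ?thesis using True L0 ag by (simp add: av_mult av_power poly_0_coeff_0)
    qed (simp add: X_def power_0_left)
    have eq: "poly Hj 0 - 1 = (poly (Apol \<circ>\<^sub>p t) 0 - 1) + poly (smult (\<delta> / of_nat p) R) 0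
            - poly (smult (\<gamma> ^ m) (X ^ (m - N) * L)) 0"
      unfolding Hj_def by simp
    show ?thesis unfolding eq by (intro av_diff_less av_add_less a1 a2 a3)
  qed
  moreover have "W dvd W * smult (\<gamma> ^ m / of_nat p) (X ^ (m - N))" by (rule dvd_triv_left)
  ultimately show ?thesis using key unfolding t_def \<delta>_def by (intro exI[of _ Hj]) metis
qed

end

context qp begin

lemma div_monic:
  assumes W: "coeff W N = 1" "degree W = N" "intp W" "N \<ge> 1"
  shows "intp G \<Longrightarrow> \<exists>Q R. G = Q * W + R \<and> intp Q \<and> intp R \<and> degree R < N"
proof (induction "degree G" arbitrary: G rule: less_induct)
  case less
  show ?case
  proof (cases "degree G < N")
    case True
    then show ?thesis using less.prems by (intro exI[of _ 0] exI[of _ G]) simp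
  next
    case False
    define d where "d = degree G"
    define c where "c = coeff G d"
    define G' where "G' = G - monom c (d - N) * W"
    have dN: "d \<ge> N" using False d_def by simp
    have "coeff G' k = 0" if "k > d - 1" for k
    proof (cases "k = d")
      case True then show ?thesis using dN W unfolding G'_def c_def by (simp add: coeff_monom_mult)
    next
      case False
      then have "k > d" using that by simp
      then have "coeff G k = 0" "coeff W (k - (d - N)) = 0" using d_def W(2) dN
        by (auto intro: coeff_eq_0)
      then show ?thesis unfolding G'_def by (simp add: coeff_monom_mult)
    qed
    then have "degree G' \<le> d - 1" by (intro degree_le) auto
    then have lt: "degree G' < degree G" using dN W(4) d_def by simp
    have "av c \<le> 1" using less.prems unfolding c_def by (rule intpD)
    then have iG': "intp G'" unfolding G'_def using less.prems W(3)
      by (intro intp_diff intp_mult intp_monom)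
    obtain Q R where QR: "G' = Q * W + R" "intp Q" "intp R" "degree R < N"
      using less.hyps[OF lt iG'] by blast
    have "G = (Q + monom c (d - N)) * W + R" using QR(1) unfolding G'_def by (simp add: algebra_simps)
    moreover have "intp (Q + monom c (d - N))" using QR(2) \<open>av c \<le> 1\<close> by (intro intp_add intp_monom)
    ultimately show ?thesis using QR by blast
  qed
qed

lemma div_exact:
  assumes W: "coeff W N = 1" "degree W = N" "intp W" "N \<ge> 1"
  assumes G: "intp G" "W dvd G - [:e:]"
  shows "\<exists>Q. intp Q \<and> G = Q * W + [:e:]"
proof -
  obtain Q R where QR: "G = Q * W + R" "intp Q" "intp R" "degree R < N"
    using div_monic[OF W G(1)] by blast
  have "W dvd (G - [:e:]) - Q * W" using G(2) by simp
  moreover have "R - [:e:] = (G - [:e:]) - Q * W" using QR(1) by simp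
  ultimately have d: "W dvd R - [:e:]" by metis
  have "R - [:e:] = 0"
  proof (rule ccontr)
    assume "R - [:e:] \<noteq> 0"
    then have "degree W \<le> degree (R - [:e:])" using d dvd_imp_degree_le by blast
    moreover have "degree (R - [:e:]) < N" using QR(4) W(4) by (intro degree_diff_less) auto
    ultimately show False using W(2) by simp
  qed
  then show ?thesis using QR by (intro exI[of _ Q]) simp
qed

lemma small_coeffs:
  assumes W: "coeff W N = 1" "degree W = N" "intp W" "N \<ge> 1" "\<And>k. k < N \<Longrightarrow> av (coeff W k) < 1"
  assumes H: "intp H" "av (coeff H 0) = 1"
  assumes P: "intp P" "W dvd H * P - [:e:]" "av e < 1"
  shows "k < N \<Longrightarrow> av (coeff P k) < 1"
proof (induction k rule: less_induct)
  case (less k)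
  obtain Q where Q: "intp Q" "H * P = Q * W + [:e:]"
    using div_exact[OF W(1-4) intp_mult[OF H(1) P(1)] P(2)] by blast
  have c1: "av (coeff (Q * W) k) < 1"
    unfolding coeff_mult
  proof (rule av_sum_less)
    fix i assume "i \<in> {..k}"
    then have "k - i < N" using less.prems by auto
    then have "av (coeff W (k - i)) < 1" by (rule W(5))
    then show "av (coeff Q i * coeff W (k - i)) < 1"
      using intpD[OF Q(1)] av_nonneg by (simp add: av_mult mult_le1_less1)
  qed simp
  have c2: "av (coeff (H * P) k) < 1"
    using Q(2) c1 P(3) by (cases k) (simp_all add: av_add_less)
  have rest: "av (\<Sum>i\<in>{..k} - {0}. coeff H i * coeff P (k - i)) < 1"
  proof (rule av_sum_less)
    fix i assume i: "i \<in> {..k} - {0}"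
    then have "k - i < k" by auto
    then have "av (coeff P (k - i)) < 1" using less.IH less.prems by simp
    then show "av (coeff H i * coeff P (k - i)) < 1"
      using intpD[OF H(1)] av_nonneg by (simp add: av_mult mult_le1_less1)
  qed simp
  have "coeff (H * P) k = coeff H 0 * coeff P k + (\<Sum>i\<in>{..k} - {0}. coeff H i * coeff P (k - i))"
    unfolding coeff_mult by (subst sum.remove[of _ 0]) auto
  then have "coeff H 0 * coeff P k = coeff (H * P) k - (\<Sum>i\<in>{..k} - {0}. coeff H i * coeff P (k - i))"
    by simp
  then have "av (coeff H 0 * coeff P k) < 1" using c2 rest by (simp add: av_diff_less)
  then show ?case using H(2) by (simp add: av_mult)
qed

lemma P_integral:
  assumes W: "coeff W N = 1" "degree W = N" "intp W" "N \<ge> 1" "\<And>k. k < N \<Longrightarrow> av (coeff W k) < 1"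
  assumes H: "intp H" "av (coeff H 0) = 1"
  assumes P: "degree P < N" "W dvd H * P - 1"
  shows "intp P \<and> av (coeff P 0) = 1"
proof -
  have fin: "finite ((\<lambda>k. av (coeff P k)) ` {..<N})" by simp
  have "0 \<in> {..<N}" using W(4) by simp
  then have ne: "(\<lambda>k. av (coeff P k)) ` {..<N} \<noteq> {}" by blast
  define M where "M = Max ((\<lambda>k. av (coeff P k)) ` {..<N})"
  obtain k0 where k0: "k0 < N" "av (coeff P k0) = M"
    using Max_in[OF fin ne] unfolding M_def by auto
  have Mge: "av (coeff P k) \<le> M" for k
  proof (cases "k < N")
    case True then show ?thesis unfolding M_def using fin by (intro Max_ge) auto
  next
    case False
    then have "coeff P k = 0" using P(1) by (intro coeff_eq_0) simp
    moreover have "0 \<le> M" using k0 av_nonneg by metis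
    ultimately show ?thesis by simp
  qed
  have iP: "intp P"
  proof (cases "M \<le> 1")
    case True then show ?thesis using Mge by (intro intpI) (meson order.trans)
  next
    case False
    define lam where "lam = coeff P k0"
    have lam: "av lam = M" "lam \<noteq> 0" using k0 False unfolding lam_def by auto
    define P' where "P' = smult (inverse lam) P"
    have iP': "intp P'" unfolding P'_def
    proof (rule intpI)
      fix k
      have "av (coeff P k) / M \<le> 1" using Mge[of k] False by simp
      then show "av (coeff (smult (inverse lam) P) k) \<le> 1"
        using lam by (simp add: av_mult av_inverse divide_inverse mult.commute)
    qed
    have "H * P' - [:inverse lam:] = smult (inverse lam) (H * P - 1)"
      unfolding P'_def by (simp add: algebra_simps smult_diff_right one_pCons)
    then have dv: "W dvd H * P' - [:inverse lam:]" using P(2) by (simp add: dvd_smult)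
    have "av (inverse lam) < 1" using lam False by (simp add: av_inverse inverse_less_1_iff)
    then have "av (coeff P' k0) < 1" using small_coeffs[OF W H iP' dv] k0 by blast
    moreover have "coeff P' k0 = 1" unfolding P'_def lam_def using lam(2) unfolding lam_def by simp
    ultimately show ?thesis by simp
  qed
  obtain Q where Q: "intp Q" "H * P = Q * W + [:1:]"
    using div_exact[OF W(1-4) intp_mult[OF H(1) iP], of 1] P(2) by (auto simp: one_pCons)
  have "coeff H 0 * coeff P 0 = coeff Q 0 * coeff W 0 + 1"
    using arg_cong[OF Q(2), of "\<lambda>f. coeff f 0"] by (simp add: coeff_mult)
  moreover have "av (coeff Q 0 * coeff W 0) < 1"
    using intpD[OF Q(1)] W(5)[of 0] W(4) av_nonneg by (simp add: av_mult mult_le1_less1)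
  ultimately have "av (coeff H 0 * coeff P 0) = 1" using av_add_dom[of "coeff Q 0 * coeff W 0" 1]
    by (simp add: add.commute)
  then show ?thesis using iP H(2) by (simp add: av_mult)
qed

lemma P_exists0:
  fixes H :: "'a poly"
  assumes "finite J" "\<And>j. j \<in> J \<Longrightarrow> poly H (r j) \<noteq> 0"
  shows "\<exists>P. (\<Prod>j\<in>J. [:- r j, 1:]) dvd H * P - 1"
  using assms
proof (induction J rule: finite_induct)
  case empty
  show ?case by simp
next
  case (insert j A)
  then obtain P1 where "(\<Prod>j\<in>A. [:- r j, 1:]) dvd H * P1 - 1" by auto
  then obtain K where K: "H * P1 - 1 = (\<Prod>j\<in>A. [:- r j, 1:]) * K" by (elim dvdE)
  define Z where "Z = (\<Prod>j\<in>A. [:- r j, 1:])"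
  define c where "c = - poly K (r j) / poly H (r j)"
  have Hr: "poly H (r j) \<noteq> 0" using insert by simp
  have "poly (K + smult c H) (r j) = 0" using Hr unfolding c_def by simp
  then obtain K2 where K2: "K + smult c H = [:- r j, 1:] * K2" using poly_eq_0_iff_dvd by (metis dvdE)
  have "H * (P1 + smult c Z) - 1 = Z * (K + smult c H)"
    using K unfolding Z_def by (simp add: algebra_simps)
  also have "\<dots> = Z * ([:- r j, 1:] * K2)" by (simp only: K2)
  also have "\<dots> = ([:- r j, 1:] * Z) * K2" by (simp only: mult_ac)
  also have "[:- r j, 1:] * Z = (\<Prod>j\<in>insert j A. [:- r j, 1:])"
    using insert(1,2) unfolding Z_def by simp
  finally show ?case by (intro exI[of _ "P1 + smult c Z"]) simp
qed

lemma P_exists: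
  fixes H :: "'a poly"
  assumes "finite J" "\<And>j. j \<in> J \<Longrightarrow> poly H (r j) \<noteq> 0"
  shows "\<exists>P. (P = 0 \<or> degree P < degree (\<Prod>j\<in>J. [:- r j, 1:])) \<and> (\<Prod>j\<in>J. [:- r j, 1:]) dvd H * P - 1"
proof -
  define W where "W = (\<Prod>j\<in>J. [:- r j, 1:])"
  have W0: "W \<noteq> 0" using assms(1) by (simp add: W_def)
  obtain P1 where P1: "W dvd H * P1 - 1" using P_exists0[of J H r] assms unfolding W_def by blast
  define P where "P = P1 mod W"
  have Pe: "P = P1 - (P1 div W) * W" unfolding P_def by (simp add: minus_div_mult_eq_mod)
  have "H * P - 1 = (H * P1 - 1) - W * (H * (P1 div W))" unfolding Pe by (simp add: algebra_simps)
  moreover have "W dvd (H * P1 - 1) - W * (H * (P1 div W))" using P1 by simp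
  ultimately have "W dvd H * P - 1" by metis
  moreover have "P = 0 \<or> degree P < degree W" unfolding P_def using degree_mod_less[OF W0] by blast
  ultimately show ?thesis unfolding W_def by blast
qed

end

context qp begin

lemma prod_near:
  "(\<And>j. j \<in> S \<Longrightarrow> av (x j - 1) < 1) \<Longrightarrow> av (prod x S - 1) < 1"
proof (induction S rule: infinite_finite_induct)
  case (insert j S)
  have e: "prod x (insert j S) - 1 = x j * (prod x S - 1) + (x j - 1)"
    using insert(1,2) by (simp add: algebra_simps)
  have "av (x j) = 1" using insert(4) av_near1 by simp
  then show ?case unfolding e using insert by (intro av_add_less) (simp_all add: av_mult)
qed simp_all

lemma prod_cong_dvd:
  fixes W :: "'b::comm_ring_1"
  shows "(\<And>j. j \<in> S \<Longrightarrow> W dvd f j - g j) \<Longrightarrow> W dvd prod f S - prod g S"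
proof (induction S rule: infinite_finite_induct)
  case (insert j S)
  have e: "prod f (insert j S) - prod g (insert j S) = f j * (prod f S - prod g S) + (f j - g j) * prod g S"
    using insert(1,2) by (simp add: algebra_simps)
  show ?case unfolding e using insert by (intro dvd_add dvd_mult dvd_mult2) auto
qed simp_all

lemma W_facts:
  assumes "W = monom 1 N + smult (of_nat p) L" "intp L" "\<forall>k\<ge>N. coeff L k = 0"
  shows "coeff W N = 1" "degree W = N" "intp W" "\<And>k. k < N \<Longrightarrow> av (coeff W k) < 1"
proof -
  have c: "coeff W k = (if k = N then 1 else 0) + of_nat p * coeff L k" for k
    using assms(1) by (simp add: coeff_monom)
  show c1: "coeff W N = 1" using c assms(3) by simp
  have "degree W \<le> N" using c assms(3) by (intro degree_le) auto
  moreover have "N \<le> degree W" using c1 by (intro le_degree) simp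
  ultimately show "degree W = N" by simp
  show "intp W" unfolding assms(1) using assms(2) av_of_nat_le by (intro intp_add intp_monom intp_smult) auto
  fix k assume "k < N"
  then have "av (coeff W k) = av (of_nat p :: 'a) * av (coeff L k)" using c by (simp add: av_mult)
  also have "\<dots> \<le> inverse (real p) * 1" using intpD[OF assms(2)] av_p
    by (intro mult_mono) (auto simp: av_nonneg)
  finally show "av (coeff W k) < 1" using ip_lt1 by simp
qed


lemma slevel:
  fixes u :: 'a and a b c d :: int and m :: nat
  assumes u: "near1 u" and ab: "a \<le> b" and Jp: "card {a..b} < p" and S: "{c..d} \<subseteq> {a..b}"
  defines "\<gamma> \<equiv> \<lambda>j::int. (u powi (-j))^m"
  defines "r \<equiv> \<lambda>j. inverse (\<gamma> j) - 1"
  defines "t \<equiv> \<lambda>j. [:\<gamma> j - 1, \<gamma> j:]"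
  defines "\<phi> \<equiv> \<lambda>j. smult (inverse (of_nat p)) (Phi \<circ>\<^sub>p t j)"
  shows "\<exists>P. intp P \<and> av (coeff P 0) = 1 \<and> degree P < card {a..b} \<and>
     (\<forall>j\<in>{a..b}. t j dvd (\<Prod>i\<in>{c..d}. \<phi> i) * P - 1) \<and>
     (\<forall>j\<in>{c..d}. t j * \<phi> j dvd (\<Prod>i\<in>{c..d}. \<phi> i) * P - \<phi> j)"
proof -
  define J where "J = {a..b}"
  define N where "N = card J"
  have finJ: "finite J" unfolding J_def by simp
  have N1: "N \<ge> 1" using ab unfolding N_def J_def by simp
  have Np: "N \<le> p - 1" using Jp unfolding N_def J_def by simp
  have ng: "near1 (\<gamma> j)" for j unfolding \<gamma>_def by (intro near1_power near1_powi u)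
  have g0: "\<gamma> j \<noteq> 0" for j using near1_av[OF ng[of j]] by force
  have ar: "av (r j) \<le> inverse (real p)" for j
    using near1_inverse[OF ng[of j]] unfolding r_def near1_def .
  have ar1: "av (r j) < 1" for j using ar av_le1_of_small by blast
  obtain L where L: "(\<Prod>j\<in>J. [:- r j, 1:]) = monom 1 N + smult (of_nat p) L" "intp L"
      "\<forall>k\<ge>N. coeff L k = 0"
    using W_struct[OF finJ, of r] ar unfolding N_def by blast
  define W where "W = (\<Prod>j\<in>J. [:- r j, 1:])"
  note Wf = W_facts[OF L(1)[folded W_def] L(2,3)]
  have L0: "av (coeff L 0) < 1" if "N = p - 1"
  proof -
    have "coeff W 0 = of_nat p * coeff L 0" using L(1) N1 unfolding W_def by (simp add: coeff_monom)
    moreover have "coeff W 0 = (\<Prod>j\<in>J. - r j)" unfolding W_def by (simp add: poly_0_coeff_0[symmetric] poly_prod)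
    ultimately have "of_nat p * coeff L 0 = (\<Prod>j\<in>J. - r j)" by simp
    then have "av (of_nat p * coeff L 0) = av (\<Prod>j\<in>J. - r j)" by simp
    then have e: "av (of_nat p :: 'a) * av (coeff L 0) = (\<Prod>j\<in>J. av (r j))"
      by (simp only: av_mult av_prod av_minus)
    have "(\<Prod>j\<in>J. av (r j)) \<le> (\<Prod>j\<in>J. inverse (real p))"
      using ar av_nonneg by (intro prod_mono) auto
    also have "\<dots> = inverse (real p) ^ N" unfolding N_def by simp
    also have "\<dots> \<le> inverse (real p) ^ 2"
      using that p_ge3 ip_lt1 ip_pos by (intro power_decreasing) auto
    finally have "inverse (real p) * av (coeff L 0) \<le> inverse (real p) * inverse (real p)"
      using e av_p by (simp add: power2_eq_square)
    then have "av (coeff L 0) \<le> inverse (real p)" using ip_pos by simp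
    then show ?thesis using av_le1_of_small by blast
  qed
  have "\<forall>j\<in>{c..d}. \<exists>Hj. intp Hj \<and> av (poly Hj 0 - 1) < 1 \<and> W dvd \<phi> j - Hj"
  proof
    fix j
    show "\<exists>Hj. intp Hj \<and> av (poly Hj 0 - 1) < 1 \<and> W dvd \<phi> j - Hj"
      using Hj_exists[OF ng[of j] L(1)[folded W_def] L(2) N1 Np L0] unfolding \<phi>_def t_def by blast
  qed
  then obtain Hf where Hf: "\<And>j. j \<in> {c..d} \<Longrightarrow> intp (Hf j) \<and> av (poly (Hf j) 0 - 1) < 1 \<and> W dvd \<phi> j - Hf j"
    by metis
  define H where "H = (\<Prod>j\<in>{c..d}. Hf j)"
  define F where "F = (\<Prod>j\<in>{c..d}. \<phi> j)"
  have iH: "intp H" unfolding H_def using Hf by (intro intp_prod) auto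
  have "av (poly H 0 - 1) < 1" unfolding H_def poly_prod using Hf by (intro prod_near) auto
  then have H0: "av (coeff H 0) = 1" by (simp add: poly_0_coeff_0 av_near1)
  have WFH: "W dvd F - H" unfolding F_def H_def using Hf by (intro prod_cong_dvd) auto
  have Hr: "poly H (r j) \<noteq> 0" for j
  proof -
    have "av (poly H (r j) - coeff H 0) < 1" by (rule poly_near0[OF iH ar1])
    then have "av (coeff H 0 + (poly H (r j) - coeff H 0)) = 1" using H0 av_add_dom by metis
    then show ?thesis by force
  qed
  obtain P where P: "P = 0 \<or> degree P < degree W" "W dvd H * P - 1"
    using P_exists[OF finJ, of H r] Hr unfolding W_def by blast
  have dP: "degree P < N" using P(1) Wf(2) N1 by auto
  have PI: "intp P \<and> av (coeff P 0) = 1" by (rule P_integral[OF Wf(1-3) N1 Wf(4) iH H0 dP P(2)])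
  have WF: "W dvd F * P - 1"
  proof -
    have "F * P - 1 = (F - H) * P + (H * P - 1)" by (simp add: algebra_simps)
    moreover have "W dvd (F - H) * P + (H * P - 1)" using WFH P(2) by (intro dvd_add dvd_mult2)
    ultimately show ?thesis by metis
  qed
  have tr: "t j = smult (\<gamma> j) [:- r j, 1:]" for j
    unfolding t_def r_def using g0[of j] by (simp add: field_simps)
  have tdvd: "t j dvd F * P - 1" if "j \<in> J" for j
  proof -
    have "[:- r j, 1:] dvd W" unfolding W_def using that finJ by (intro dvd_prodI) auto
    then have "[:- r j, 1:] dvd F * P - 1" using WF dvd_trans by blast
    then show ?thesis unfolding tr using g0[of j] by (rule smult_dvd)
  qed
  have tphi: "t j * \<phi> j dvd F * P - \<phi> j" if j: "j \<in> {c..d}" for j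
  proof -
    define F' where "F' = (\<Prod>i\<in>{c..d} - {j}. \<phi> i)"
    have FF: "F = \<phi> j * F'" unfolding F_def F'_def using j by (simp add: prod.remove)
    have pt: "poly (t j) (r j) = 0" unfolding t_def r_def using g0[of j] by (simp add: field_simps)
    have "poly (\<phi> j - 1) (r j) = 0" unfolding \<phi>_def using pt p_gt1
      by (simp add: poly_pcompose poly_Phi_0)
    then have "[:- r j, 1:] dvd \<phi> j - 1" by (simp only: poly_eq_0_iff_dvd)
    then have t1: "t j dvd \<phi> j - 1" unfolding tr using g0[of j] by (rule smult_dvd)
    have jJ: "j \<in> J" using j S unfolding J_def by auto
    have "F' * P - 1 = (F * P - 1) - (\<phi> j - 1) * (F' * P)" unfolding FF by (simp add: algebra_simps)
    moreover have "t j dvd (F * P - 1) - (\<phi> j - 1) * (F' * P)"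
      using tdvd[OF jJ] t1 by (rule dvd_diff[OF _ dvd_mult2])
    ultimately have "t j dvd F' * P - 1" by metis
    then have "t j * \<phi> j dvd (F' * P - 1) * \<phi> j" by (rule mult_dvd_mono) simp
    moreover have "(F' * P - 1) * \<phi> j = F * P - \<phi> j" unfolding FF by (simp add: algebra_simps)
    ultimately show ?thesis by simp
  qed
  show ?thesis using PI dP tdvd tphi unfolding F_def N_def J_def by blast
qed

end

lemma X1_pcompose: "[:1, 1:] \<circ>\<^sub>p (g :: 'a::comm_ring_1 poly) = 1 + g"
  by (simp add: pcompose_pCons one_pCons pcompose_const)

lemma twist_X1:
  fixes u :: "'a::field_char_0"
  shows "twist u j ([:1,1:]^k - 1) = smult ((u powi (-j))^k) ([:1,1:]^k) - 1"
proof -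
  define c where "c = u powi (-j)"
  have e1: "[:1, 1:] \<circ>\<^sub>p [:c - 1, c:] = smult c [:1, 1:]" by (simp add: X1_pcompose one_pCons)
  have e2: "(1::'a poly) \<circ>\<^sub>p [:c - 1, c:] = 1" by (simp add: one_pCons pcompose_const)
  have "twist u j ([:1,1:]^k - 1) = ([:1, 1:] \<circ>\<^sub>p [:c - 1, c:])^k - 1 \<circ>\<^sub>p [:c - 1, c:]"
    unfolding twist_def c_def[symmetric] by (simp only: pcompose_diff pcompose_power_left)
  also have "\<dots> = smult (c^k) ([:1,1:]^k) - 1" unfolding e1 e2 by (simp only: smult_power)
  finally show ?thesis unfolding c_def .
qed

lemma twist_comp:
  fixes u :: "'a::field_char_0"
  assumes "Y = [:1,1:]^m - 1"
  shows "twist u j (f \<circ>\<^sub>p Y) = (f \<circ>\<^sub>p [:(u powi (-j))^m - 1, (u powi (-j))^m:]) \<circ>\<^sub>p Y"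
proof -
  have "Y \<circ>\<^sub>p [:u powi (- j) - 1, u powi (- j):] = twist u j Y" unfolding twist_def ..
  also have "\<dots> = smult ((u powi (-j))^m) ([:1,1:]^m) - 1" unfolding assms by (rule twist_X1)
  also have "\<dots> = [:(u powi (-j))^m - 1, (u powi (-j))^m:] \<circ>\<^sub>p Y"
    unfolding assms by (simp add: pcompose_pCons algebra_simps smult_diff_right one_pCons)
  finally have e: "Y \<circ>\<^sub>p [:u powi (- j) - 1, u powi (- j):] = [:(u powi (-j))^m - 1, (u powi (-j))^m:] \<circ>\<^sub>p Y" .
  show ?thesis unfolding twist_def by (simp add: pcompose_assoc[symmetric] e)
qed


definition bez :: "'a::comm_ring_1 \<Rightarrow> 'a \<Rightarrow> bool" where
  "bez x y \<longleftrightarrow> (\<exists>s t. s * x + t * y = 1)"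

lemma bez_dvd:
  fixes a b g :: "'a::comm_ring_1"
  assumes "bez a b" "a dvd g" "b dvd g" shows "a * b dvd g"
proof -
  obtain s t where st: "s * a + t * b = 1" using assms(1) unfolding bez_def by blast
  have "g = s * (a * g) + t * (b * g)" by (metis st mult.assoc mult.left_commute mult_1 ring_class.ring_distribs(2))
  moreover have "a * b dvd a * g" using assms(3) by (rule mult_dvd_mono[OF dvd_refl])
  moreover have "a * b dvd b * g" using assms(2) by (metis dvd_mult_left mult.commute mult_dvd_mono dvd_refl)
  ultimately show ?thesis by (metis dvd_add dvd_mult)
qed

lemma bez_mult:
  fixes a b c :: "'a::comm_ring_1"
  assumes "bez a b" "bez a c" shows "bez a (b * c)"
proof -
  obtain s1 t1 where 1: "s1 * a + t1 * b = 1" using assms(1) unfolding bez_def by blast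
  obtain s2 t2 where 2: "s2 * a + t2 * c = 1" using assms(2) unfolding bez_def by blast
  have "(s1 * a + t1 * b) * (s2 * a + t2 * c) = 1" using 1 2 by simp
  then have "(s1 * s2 * a + s1 * t2 * c + t1 * b * s2) * a + (t1 * t2) * (b * c) = 1"
    by (simp add: algebra_simps)
  then show ?thesis unfolding bez_def by blast
qed

lemma bez_prod:
  fixes a :: "'a::comm_ring_1"
  shows "(\<And>i. i \<in> A \<Longrightarrow> bez a (f i)) \<Longrightarrow> bez a (prod f A)"
proof (induction A rule: infinite_finite_induct)
  case (infinite A)
  then show ?case unfolding bez_def by (intro exI[of _ 0] exI[of _ 1]) simp
next
  case empty
  then show ?case unfolding bez_def by (intro exI[of _ 0] exI[of _ 1]) simp
next
  case (insert x F)
  then show ?case by (simp add: bez_mult)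
qed

lemma bez_divisors:
  fixes a b :: "'a::comm_ring_1"
  assumes "a dvd a'" "b dvd b'" "bez a' b'" shows "bez a b"
proof -
  obtain k where k: "a' = a * k" using assms(1) by (elim dvdE)
  obtain l where l: "b' = b * l" using assms(2) by (elim dvdE)
  obtain s t where "s * a' + t * b' = 1" using assms(3) unfolding bez_def by blast
  then have "(s * k) * a + (t * l) * b = 1" unfolding k l by (simp add: algebra_simps)
  then show ?thesis unfolding bez_def by blast
qed

lemma prod_dvd_bez:
  fixes M :: "'b \<Rightarrow> 'a::comm_ring_1"
  assumes "finite A" "\<And>i. i \<in> A \<Longrightarrow> M i dvd g"
    "\<And>i j. i \<in> A \<Longrightarrow> j \<in> A \<Longrightarrow> i \<noteq> j \<Longrightarrow> bez (M i) (M j)"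
  shows "prod M A dvd g"
  using assms
proof (induction A rule: finite_induct)
  case (insert x F)
  have "bez (M x) (prod M F)" using insert by (intro bez_prod) auto
  then show ?case using insert by (simp add: bez_dvd)
qed simp

lemma uniq_core:
  fixes q1 q2 :: "'a::field poly" and M :: "'b \<Rightarrow> 'a poly"
  assumes "finite A" "\<And>i. i \<in> A \<Longrightarrow> M i dvd q1 - q2"
    "\<And>i j. i \<in> A \<Longrightarrow> j \<in> A \<Longrightarrow> i \<noteq> j \<Longrightarrow> bez (M i) (M j)"
    "\<And>i. i \<in> A \<Longrightarrow> M i \<noteq> 0" "degree q1 < D" "degree q2 < D" "(\<Sum>i\<in>A. degree (M i)) = D"
  shows "q1 = q2"
proof (rule ccontr)
  assume ne: "q1 \<noteq> q2"
  have "prod M A dvd q1 - q2" by (rule prod_dvd_bez[OF assms(1-3)])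
  then have "degree (prod M A) \<le> degree (q1 - q2)" using ne by (intro dvd_imp_degree_le) auto
  moreover have "degree (prod M A) = D" using assms(4,7) by (simp add: degree_prod_eq_sum_degree)
  moreover have "degree (q1 - q2) < D" using assms(5,6) by (rule degree_diff_less)
  ultimately show False by simp
qed


context qp begin

lemma fps_inv_int:
  assumes f: "\<And>i. av (f $ i) \<le> 1" "av (f $ 0) = 1" and fg: "f * g = 1"
  shows "av (g $ n) \<le> 1"
proof (induction n rule: less_induct)
  case (less n)
  show ?case
  proof (cases "n = 0")
    case True
    have "f $ 0 * g $ 0 = 1" using arg_cong[OF fg, of "\<lambda>h. h $ 0"] by simp
    then have "av (f $ 0) * av (g $ 0) = 1" by (metis av_1 av_mult)
    then show ?thesis using True f(2) by simp
  next
    case False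
    have "(f * g) $ n = 0" using fg False by simp
    then have "(\<Sum>i=0..n. f $ i * g $ (n - i)) = 0" by (simp add: fps_mult_nth)
    moreover have "(\<Sum>i=0..n. f $ i * g $ (n - i)) = f $ 0 * g $ n + (\<Sum>i\<in>{0..n} - {0}. f $ i * g $ (n - i))"
      by (subst sum.remove[of _ 0]) auto
    ultimately have "f $ 0 * g $ n = - (\<Sum>i\<in>{0..n} - {0}. f $ i * g $ (n - i))" by (simp add: eq_neg_iff_add_eq_0)
    moreover have "av (\<Sum>i\<in>{0..n} - {0}. f $ i * g $ (n - i)) \<le> 1"
    proof (rule av_sum_le)
      fix i assume "i \<in> {0..n} - {0}"
      then have "n - i < n" by auto
      then have "av (g $ (n - i)) \<le> 1" by (rule less.IH)
      then show "av (f $ i * g $ (n - i)) \<le> 1" using f(1)[of i] av_nonneg by (simp add: av_mult mult_le_one)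
    qed simp
    ultimately have "av (f $ 0 * g $ n) \<le> 1" by simp
    then show ?thesis using f(2) by (simp add: av_mult)
  qed
qed

end

lemma pcompose_dvd: "a dvd b \<Longrightarrow> a \<circ>\<^sub>p Y dvd b \<circ>\<^sub>p (Y :: 'a::comm_ring_1 poly)"
  by (elim dvdE) (simp add: pcompose_mult)

lemma one_pcompose[simp]: "(1 :: 'a::comm_ring_1 poly) \<circ>\<^sub>p Y = 1"
  by (simp add: one_pCons pcompose_const)

lemma degree_smX: 
  fixes e :: "'a::field"
  assumes "e \<noteq> 0" "k \<ge> 1"
  shows "degree (smult e ([:1,1:]^k) - 1) = k" "smult e ([:1,1:]^k) - 1 \<noteq> 0"
proof -
  have c: "coeff (smult e ([:1,1:]^k) - 1) k = e" using assms(2) coeff_linear_power[of "1::'a" k]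
    by (simp add: coeff_1)
  have "degree (smult e ([:1,1:]^k) - 1) \<le> k"
    by (rule degree_diff_le) (auto simp: degree_linear_power)
  moreover have "k \<le> degree (smult e ([:1,1:]^k) - 1)" using c assms(1) by (intro le_degree) simp
  ultimately show "degree (smult e ([:1,1:]^k) - 1) = k" by simp
  show "smult e ([:1,1:]^k) - 1 \<noteq> 0" using c assms(1) by (metis coeff_0)
qed

theorem mainTheorem3:
  fixes p :: nat and av :: "'a::field_char_0 \<Rightarrow> real" and u :: 'a
    and a b c d :: int and n :: nat
  assumes "prime p" and "odd p"
    and "is_Qp p av"
    and "av (u - 1) \<le> inverse (real p)" and "u \<noteq> 1"
    and "a \<le> b" and "card {a..b} < p"
    and "{c..d} \<subseteq> {a..b}"
    and "n \<ge> 1"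
  shows "\<exists>U V. Zp_fps av U \<and> Zp_fps av V \<and> U * V = 1 \<and>
           fps_of_poly (xi_tilde p u n {c..d} {a..b}) = fps_of_poly (ell p u n {c..d}) * U"
proof -
  interpret qp p av by unfold_locales (use assms in auto)
  note ab = assms(6) and Jp = assms(7) and S = assms(8) and n1 = assms(9)
  have nu: "near1 u" using assms(4) unfolding near1_def .
  define m where "m = p ^ (n - 1)"
  have m1: "m \<ge> 1" unfolding m_def using p_gt1 by simp
  have pn: "p ^ n = m * p" unfolding m_def using n1 by (cases n) auto
  define Y where "Y = ([:1,1:]^m - 1 :: 'a poly)"
  have omn1: "omega p (n - 1) = Y" unfolding omega_def Y_def m_def ..
  have omn: "omega p n = ([:0,1:] * Phi) \<circ>\<^sub>p Y"
  proof -
    have "omega p n = ([:1,1:]^m)^p - 1" unfolding omega_def pn by (simp add: power_mult)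
    also have "\<dots> = ([:1,1:]^p - 1) \<circ>\<^sub>p Y"
      unfolding Y_def by (simp add: pcompose_diff pcompose_power_left X1_pcompose)
    finally show ?thesis by (simp only: X_Phi)
  qed
  have cY: "coeff Y m = 1" unfolding Y_def using m1 coeff_linear_power[of "1::'a" m] by (simp add: coeff_1)
  have Y0: "Y \<noteq> 0" using cY by auto
  have dY: "degree Y = m"
  proof -
    have "degree Y \<le> m" unfolding Y_def by (rule degree_diff_le) (auto simp: degree_linear_power)
    moreover have "m \<le> degree Y" using cY by (intro le_degree) simp
    ultimately show ?thesis by simp
  qed
  have iY: "intp Y" unfolding Y_def by (intro intp_diff intp_power) simp_all
  have pY0: "poly Y 0 = 0" unfolding Y_def by simp
  have xi: "xi p n = Phi \<circ>\<^sub>p Y"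
    unfolding xi_def omn omn1 pcompose_mult using Y0 by simp
  define \<gamma> where "\<gamma> = (\<lambda>j::int. (u powi (-j))^m)"
  define t where "t = (\<lambda>j. [:\<gamma> j - 1, \<gamma> j:])"
  define \<phi> where "\<phi> = (\<lambda>j. smult (inverse (of_nat p)) (Phi \<circ>\<^sub>p t j))"
  have "\<exists>P. intp P \<and> av (coeff P 0) = 1 \<and> degree P < card {a..b} \<and>
     (\<forall>j\<in>{a..b}. t j dvd (\<Prod>i\<in>{c..d}. \<phi> i) * P - 1) \<and>
     (\<forall>j\<in>{c..d}. t j * \<phi> j dvd (\<Prod>i\<in>{c..d}. \<phi> i) * P - \<phi> j)"
    unfolding \<phi>_def t_def \<gamma>_def by (rule slevel[OF nu ab Jp S])
  then obtain P where P: "intp P" "av (coeff P 0) = 1" "degree P < card {a..b}"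
    "\<And>j. j \<in> {a..b} \<Longrightarrow> t j dvd (\<Prod>i\<in>{c..d}. \<phi> i) * P - 1"
    "\<And>j. j \<in> {c..d} \<Longrightarrow> t j * \<phi> j dvd (\<Prod>i\<in>{c..d}. \<phi> i) * P - \<phi> j" by blast
  define F where "F = (\<Prod>i\<in>{c..d}. \<phi> i)"
  define q where "q = (F * P) \<circ>\<^sub>p Y"
  have tw: "twist u j (f \<circ>\<^sub>p Y) = (f \<circ>\<^sub>p t j) \<circ>\<^sub>p Y" for j f
    unfolding t_def \<gamma>_def by (rule twist_comp[OF Y_def])
  have Tj: "smult (inverse (of_nat p)) (twist u j (xi p n)) = \<phi> j \<circ>\<^sub>p Y" for j
    unfolding xi tw \<phi>_def by (simp add: pcompose_smult)
  have ellF: "ell p u n {c..d} = F \<circ>\<^sub>p Y"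
    unfolding ell_def Tj F_def by (simp add: pcompose_prod)
  have Ej: "twist u j (omega p n) = smult (of_nat p) ((t j * \<phi> j) \<circ>\<^sub>p Y)" for j
  proof -
    have "twist u j (omega p n) = (t j * (Phi \<circ>\<^sub>p t j)) \<circ>\<^sub>p Y"
      unfolding omn tw by (simp only: pcompose_mult pcompose_X_left)
    moreover have "t j * (Phi \<circ>\<^sub>p t j) = smult (of_nat p) (t j * \<phi> j)"
      unfolding \<phi>_def using p_gt1 by simp
    ultimately show ?thesis by (simp add: pcompose_smult)
  qed
  have Dj: "twist u j (omega p (n - 1)) = t j \<circ>\<^sub>p Y" for j
    using tw[of j "[:0,1:]"] unfolding omn1 by simp
  define J where "J = {a..b}"
  define S' where "S' = {c..d}"
  define N where "N = card J"
  define cS where "cS = card S'"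
  have finJ: "finite J" unfolding J_def by simp
  have SJ: "S' \<subseteq> J" using S unfolding S'_def J_def .
  have finS: "finite S'" unfolding S'_def by simp
  have cSN: "cS \<le> N" unfolding cS_def N_def by (rule card_mono[OF finJ SJ])
  have N1: "N \<ge> 1" using ab unfolding N_def J_def by simp
  define D where "D = ((p - 1) * cS + N) * m"
  have D0: "D > 0" unfolding D_def using N1 m1 by simp
  define Cond where "Cond = (\<lambda>q'. (q' = 0 \<or> degree q' < D) \<and>
     (\<forall>j\<in>S'. q' mod twist u j (omega p n)
               = smult (inverse (of_nat p)) (twist u j (xi p n)) mod twist u j (omega p n)) \<and>
     (\<forall>j\<in>J - S'. q' mod twist u j (omega p (n - 1)) = 1 mod twist u j (omega p (n - 1))))"
  have xt: "xi_tilde p u n {c..d} {a..b} = (THE q. Cond q)"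
    unfolding xi_tilde_def Cond_def D_def cS_def N_def S'_def J_def m_def ..
  have degq: "degree q < D"
  proof -
    have "degree (\<phi> i) \<le> p - 1" for i
    proof -
      have "degree (\<phi> i) \<le> degree (Phi \<circ>\<^sub>p t i)" unfolding \<phi>_def by (rule degree_smult_le)
      also have "\<dots> \<le> degree Phi * degree (t i)" by (rule degree_pcompose_le)
      also have "\<dots> \<le> (p - 1) * 1" using degree_Phi unfolding t_def
        by (intro mult_mono) (auto simp: degree_pCons_le)
      finally show ?thesis by simp
    qed
    then have "degree F \<le> cS * (p - 1)" unfolding F_def cS_def S'_def
      using degree_prod_sum_le[of "{c..d}" \<phi>] sum_bounded_above[of "{c..d}" "degree \<circ> \<phi>" "p - 1"]
      by (simp add: o_def)
    moreover have "degree P < N" using P(3) unfolding N_def J_def .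
    ultimately have "degree (F * P) < (p - 1) * cS + N"
      using degree_mult_le[of F P] by (simp add: mult.commute)
    then have "degree (F * P) * m < ((p - 1) * cS + N) * m" using m1 by simp
    then show ?thesis unfolding q_def D_def degree_pcompose dY .
  qed
  have Tq: "smult (inverse (of_nat p)) (twist u j (xi p n)) = \<phi> j \<circ>\<^sub>p Y" for j by (rule Tj)
  have condq: "Cond q"
    unfolding Cond_def
  proof (intro conjI ballI)
    show "q = 0 \<or> degree q < D" using degq by simp
  next
    fix j assume j: "j \<in> S'"
    have "(t j * \<phi> j) \<circ>\<^sub>p Y dvd (F * P - \<phi> j) \<circ>\<^sub>p Y"
      using P(5) j unfolding F_def S'_def by (intro pcompose_dvd) auto
    then have "twist u j (omega p n) dvd q - \<phi> j \<circ>\<^sub>p Y"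
      unfolding Ej q_def pcompose_diff using p_gt1 by (intro smult_dvd) auto
    then show "q mod twist u j (omega p n)
        = smult (inverse (of_nat p)) (twist u j (xi p n)) mod twist u j (omega p n)"
      unfolding Tq by (simp add: mod_eq_dvd_iff)
  next
    fix j assume j: "j \<in> J - S'"
    have "t j \<circ>\<^sub>p Y dvd (F * P - 1) \<circ>\<^sub>p Y"
      using P(4) j unfolding F_def J_def by (intro pcompose_dvd) auto
    then have "twist u j (omega p (n - 1)) dvd q - 1"
      unfolding Dj q_def pcompose_diff by simp
    then show "q mod twist u j (omega p (n - 1)) = 1 mod twist u j (omega p (n - 1))"
      by (simp add: mod_eq_dvd_iff)
  qed
  define E where "E = (\<lambda>j. twist u j (omega p n))"
  define M where "M = (\<lambda>j. if j \<in> S' then twist u j (omega p n) else twist u j (omega p (n - 1)))"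
  define e where "e = (\<lambda>j::int. (u powi (-j))^(p^n))"
  have u0: "u \<noteq> 0" using near1_av[OF nu] by force
  have e0: "e j \<noteq> 0" for j unfolding e_def using u0 by simp
  have g0: "\<gamma> j \<noteq> 0" for j unfolding \<gamma>_def using u0 by simp
  have Etw: "twist u j (omega p n) = E j" for j by (simp add: E_def)
  have Ee: "E j = smult (e j) ([:1,1:]^(p^n)) - 1" for j
    unfolding E_def e_def omega_def by (rule twist_X1)
  have De: "twist u j (omega p (n - 1)) = smult (\<gamma> j) ([:1,1:]^m) - 1" for j
    unfolding \<gamma>_def omega_def m_def by (rule twist_X1)
  have ME: "M j dvd E j" for j
  proof (cases "j \<in> S'")
    case False
    have "E j = (smult (\<gamma> j) ([:1,1:]^m))^p - 1"
      unfolding Ee e_def \<gamma>_def pn by (simp add: smult_power power_mult)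
    also have "\<dots> = (smult (\<gamma> j) ([:1,1:]^m) - 1) * (\<Sum>i<p. (smult (\<gamma> j) ([:1,1:]^m))^i)"
      by (rule power_diff_1_eq)
    finally show ?thesis using False unfolding M_def De by simp
  qed (simp add: M_def E_def)
  have eK: "e j = u powi (- j * int (p ^ n))" for j
  proof -
    have "u powi (- j * int (p ^ n)) = (u powi (- j)) powi (int (p ^ n))" by (rule power_int_mult)
    also have "\<dots> = (u powi (- j)) ^ (p ^ n)" by (rule power_int_of_nat)
    finally show ?thesis unfolding e_def by simp
  qed
  have eij: "e i \<noteq> e j" if "i \<noteq> j" for i j
  proof
    assume eq: "e i = e j"
    define K where "K = int (p ^ n)"
    have K0: "K \<noteq> 0" unfolding K_def using p_gt1 by simp
    have "u powi ((j - i) * K) = u powi (- i * K) * u powi (j * K)"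
      using u0 by (simp add: power_int_add[symmetric] algebra_simps)
    also have "\<dots> = u powi (- j * K) * u powi (j * K)" using eq unfolding eK K_def by simp
    also have "\<dots> = 1" using u0 by (simp add: power_int_add[symmetric])
    finally have "u powi ((j - i) * K) = 1" .
    moreover have "(j - i) * K \<noteq> 0" using that K0 by simp
    ultimately show False using no_root_int[OF nu assms(5)] by blast
  qed
  have bezE: "bez (E i) (E j)" if "i \<noteq> j" for i j
  proof -
    define cc where "cc = e i - e j"
    have cc0: "cc \<noteq> 0" unfolding cc_def using eij[OF that] by simp
    have h: "smult (e j) (E i) - smult (e i) (E j) = [:cc:]"
      unfolding Ee cc_def by (simp add: smult_diff_right algebra_simps one_pCons)
    have "[:e j / cc:] * E i + [:- e i / cc:] * E j = smult (inverse cc) (smult (e j) (E i) - smult (e i) (E j))"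
      by (simp add: smult_diff_right divide_inverse mult.commute)
    also have "\<dots> = smult (inverse cc) [:cc:]" by (simp only: h)
    also have "\<dots> = 1" using cc0 by (simp add: one_pCons)
    finally show ?thesis unfolding bez_def by blast
  qed
  have Mdeg: "degree (M j) = (if j \<in> S' then p ^ n else m)" and M0: "M j \<noteq> 0" for j
  proof -
    have pn1: "p ^ n \<ge> 1" using p_gt1 by simp
    show "degree (M j) = (if j \<in> S' then p ^ n else m)"
      unfolding M_def De Etw Ee using degree_smX(1)[OF e0 pn1] degree_smX(1)[OF g0 m1] by simp
    show "M j \<noteq> 0"
      unfolding M_def De Etw Ee using degree_smX(2)[OF e0 pn1] degree_smX(2)[OF g0 m1] by simp
  qed
  have sumdeg: "(\<Sum>j\<in>J. degree (M j)) = D"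
  proof -
    have "(\<Sum>j\<in>J. degree (M j)) = (\<Sum>j\<in>J. if j \<in> S' then p ^ n else m)" using Mdeg by simp
    also have "\<dots> = cS * p ^ n + (N - cS) * m"
      using finJ SJ by (simp add: sum.If_cases Int_absorb1 N_def cS_def card_Diff_subset finS
          Diff_eq[symmetric] Int_commute)
    also have "\<dots> = D" unfolding D_def pn
    proof -
      obtain x where x: "N = cS + x" using cSN le_Suc_ex by blast
      obtain p' where p': "p = Suc p'" using p_gt1 by (cases p) auto
      show "cS * (m * p) + (N - cS) * m = ((p - 1) * cS + N) * m"
        unfolding x p' by (simp add: algebra_simps)
    qed
    finally show ?thesis .
  qed
  have uniq: "q' = q" if cq: "Cond q'" for q'
  proof (rule uniq_core[of J M q' q D])
    show "finite J" by (rule finJ)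
  next
    fix j assume j: "j \<in> J"
    show "M j dvd q' - q"
    proof (cases "j \<in> S'")
      case True
      then have "q' mod E j = q mod E j" using cq condq unfolding Cond_def E_def by auto
      then show ?thesis using True unfolding M_def E_def by (simp add: mod_eq_dvd_iff)
    next
      case False
      then have "q' mod twist u j (omega p (n - 1)) = q mod twist u j (omega p (n - 1))"
        using cq condq j unfolding Cond_def by auto
      then show ?thesis using False unfolding M_def by (simp add: mod_eq_dvd_iff)
    qed
  next
    fix i j assume "i \<in> J" "j \<in> J" "i \<noteq> j"
    show "bez (M i) (M j)" by (rule bez_divisors[OF ME ME bezE[OF \<open>i \<noteq> j\<close>]])
  next
    fix j show "M j \<noteq> 0" by (rule M0)
  next
    show "degree q' < D" using cq D0 unfolding Cond_def by auto
  next
    show "degree q < D" by (rule degq)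
  next
    show "(\<Sum>j\<in>J. degree (M j)) = D" by (rule sumdeg)
  qed
  have xtq: "xi_tilde p u n {c..d} {a..b} = q"
    unfolding xt by (rule the_equality[of Cond q, OF condq uniq])
  define U where "U = fps_of_poly (P \<circ>\<^sub>p Y)"
  have iPY: "intp (P \<circ>\<^sub>p Y)" by (rule intp_pcompose[OF P(1) iY])
  have U0: "U $ 0 = coeff P 0"
    unfolding U_def fps_of_poly_nth by (simp add: poly_0_coeff_0[symmetric] poly_pcompose pY0)
  have aU0: "av (U $ 0) = 1" using U0 P(2) by simp
  have UV: "U * inverse U = 1" using aU0 by (intro inverse_mult_eq_1') force
  have ZU: "Zp_fps av U" unfolding Zp_fps_def U_def fps_of_poly_nth using iPY by (simp add: intpD)
  have ZV: "Zp_fps av (inverse U)" unfolding Zp_fps_def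
  proof
    fix i show "av (inverse U $ i) \<le> 1"
      by (rule fps_inv_int[OF _ aU0 UV]) (use ZU in \<open>simp add: Zp_fps_def\<close>)
  qed
  have "fps_of_poly (xi_tilde p u n {c..d} {a..b}) = fps_of_poly (ell p u n {c..d}) * U"
    unfolding xtq q_def ellF U_def by (simp add: pcompose_mult fps_of_poly_mult)
  then show ?thesis using ZU ZV UV by blast
qed

end
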